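(* Let $V$ and $W$ be two-dimensional inner-product spaces and let $x,y\in V$ be linearly independent. Let $\theta$ be the angle between $x$ and $y$ and $r=|y|/|x|$. There exists a constant $C>0$, depending continuously on $\theta$ and $r$, such that for every $A\in\mathrm{Hom}(V,W)$, \[ \mathrm{dist}^2(A,\mathrm{O}(V,W))\le C\left[\Big(\frac{|Ax|}{|x|}-1\Big)^2+\Big(\frac{|Ay|}{|y|}-1\Big)^2+\Big(\frac{|A(x+y)|}{|x+y|}-1\Big)^2\right]. \]
   Context: $\mathrm{O}(V,W)$ denotes the set of linear isometries $V\to W$. The distance is measured in the Frobenius (Hilbert–Schmidt) norm induced by the inner products on $V$ and $W$. *)

theory Defs
  imports "HOL-Analysis.Analysis"
begin

text \<open>Frobenius (Hilbert-Schmidt) norm of a map V -> W, computed in the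
  orthonormal basis Basis of the euclidean space V (basis independent for linear maps).\<close>
definition frob_norm :: "('a::euclidean_space \<Rightarrow> 'b::real_inner) \<Rightarrow> real" where
  "frob_norm L = sqrt (\<Sum>b\<in>Basis. (norm (L b))\<^sup>2)"

definition lin_isometries :: "('a::real_normed_vector \<Rightarrow> 'b::real_normed_vector) set" where
  "lin_isometries = {Q. linear Q \<and> (\<forall>v. norm (Q v) = norm v)}"

definition dist_O :: "('a::euclidean_space \<Rightarrow> 'b::euclidean_space) \<Rightarrow> real" where
  "dist_O A = Inf ((\<lambda>Q. frob_norm (\<lambda>v. A v - Q v)) ` lin_isometries)"

definition vangle :: "'a::real_inner \<Rightarrow> 'a \<Rightarrow> real" where
  "vangle x y = (if x = 0 \<or> y = 0 then pi / 2 else arccos (inner x y / (norm x * norm y)))"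

end

theory Submission
  imports Defs
begin


lemma decomp2:
  fixes e1 e2 z :: "'a::euclidean_space"
  assumes "DIM('a) = 2" "norm e1 = 1" "norm e2 = 1" "inner e1 e2 = 0"
  shows "z = inner z e1 *\<^sub>R e1 + inner z e2 *\<^sub>R e2"
proof (rule ccontr)
  assume H: "z \<noteq> inner z e1 *\<^sub>R e1 + inner z e2 *\<^sub>R e2"
  define z' where "z' = z - (inner z e1 *\<^sub>R e1 + inner z e2 *\<^sub>R e2)"
  have z0: "z' \<noteq> 0" using H by (simp add: z'_def)
  have e11: "inner e1 e1 = 1" using assms(2) by (simp add: dot_square_norm)
  have e22: "inner e2 e2 = 1" using assms(3) by (simp add: dot_square_norm)
  have e21: "inner e2 e1 = 0" using assms(4) by (simp add: inner_commute)
  have o1: "inner z' e1 = 0" using e11 e21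
    by (simp add: z'_def inner_diff_left inner_add_left)
  have o2: "inner z' e2 = 0" using e22 assms(4)
    by (simp add: z'_def inner_diff_left inner_add_left)
  have ne: "e1 \<noteq> e2" using assms(4) e11 by auto
  have nz: "e1 \<noteq> 0" "e2 \<noteq> 0" using assms by auto
  have z1: "z' \<noteq> e1" using o1 e11 by auto
  have z2: "z' \<noteq> e2" using o2 e22 by auto
  have "pairwise orthogonal {z', e1, e2}"
    using o1 o2 assms(4) by (auto simp: pairwise_def orthogonal_def inner_commute)
  then have "independent {z', e1, e2}"
    using pairwise_orthogonal_independent z0 nz by auto
  then have "card {z', e1, e2} \<le> 2" using independent_bound assms(1) by metis
  moreover have "card {z', e1, e2} = 3" using ne z1 z2 by auto
  ultimately show False by simp
qed

lemma perp_exists: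
  fixes f :: "'a::euclidean_space"
  assumes "DIM('a) = 2"
  shows "\<exists>g. norm g = 1 \<and> inner f g = 0"
proof -
  have "span {f} \<noteq> UNIV"
  proof
    assume "span {f} = UNIV"
    then have "dim (UNIV::'a set) = dim {f}" by (metis dim_span)
    then show False using assms by (simp split: if_splits)
  qed
  then obtain a :: 'a where a: "a \<noteq> 0" "\<forall>x\<in>span {f}. a \<bullet> x = 0"
    using span_not_UNIV_orthogonal by blast
  have "inner a f = 0" using a(2) by (simp add: span_base)
  then show ?thesis
    by (intro exI[of _ "a /\<^sub>R norm a"]) (use a(1) in \<open>auto simp: inner_commute\<close>)
qed

lemma frob_sq:
  fixes L :: "'a::euclidean_space \<Rightarrow> 'b::real_inner"
  assumes "DIM('a) = 2" "norm e1 = 1" "norm e2 = 1" "inner e1 e2 = 0" "linear L"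
  shows "(frob_norm L)\<^sup>2 = (norm (L e1))\<^sup>2 + (norm (L e2))\<^sup>2"
proof -
  have Lb: "L b = inner b e1 *\<^sub>R L e1 + inner b e2 *\<^sub>R L e2" for b
    using decomp2[OF assms(1-4), of b] assms(5)
    by (metis linear_add linear_scale)
  have nb: "(norm (L b))\<^sup>2 = (inner b e1)\<^sup>2 * (norm (L e1))\<^sup>2
     + 2 * (inner b e1 * inner b e2) * inner (L e1) (L e2) + (inner b e2)\<^sup>2 * (norm (L e2))\<^sup>2" for b
  proof -
    have c: "inner (L e2) (L e1) = inner (L e1) (L e2)" by (rule inner_commute)
    show ?thesis
      apply (subst Lb[of b])
      unfolding power2_norm_eq_inner inner_add_left inner_add_right inner_scaleR_left inner_scaleR_right c
      by (simp add: power2_eq_square algebra_simps)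
  qed
  have s1: "(\<Sum>b\<in>Basis. (inner b e1)\<^sup>2) = 1"
    using euclidean_inner[of e1 e1] assms(2) by (simp add: power2_eq_square inner_commute dot_square_norm)
  have s2: "(\<Sum>b\<in>Basis. (inner b e2)\<^sup>2) = 1"
    using euclidean_inner[of e2 e2] assms(3) by (simp add: power2_eq_square inner_commute dot_square_norm)
  have s12: "(\<Sum>b\<in>Basis. inner b e1 * inner b e2) = 0"
    using euclidean_inner[of e1 e2] assms(4) by (simp add: inner_commute)
  have "(frob_norm L)\<^sup>2 = (\<Sum>b\<in>Basis. (norm (L b))\<^sup>2)"
    unfolding frob_norm_def by (simp add: sum_nonneg)
  also have "\<dots> = (\<Sum>b\<in>Basis. (inner b e1)\<^sup>2 * (norm (L e1))\<^sup>2)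
     + (\<Sum>b\<in>Basis. 2 * (inner b e1 * inner b e2) * inner (L e1) (L e2))
     + (\<Sum>b\<in>Basis. (inner b e2)\<^sup>2 * (norm (L e2))\<^sup>2)"
    by (subst sum.cong[OF refl nb]) (simp only: sum.distrib)
  also have "\<dots> = (\<Sum>b\<in>Basis. (inner b e1)\<^sup>2) * (norm (L e1))\<^sup>2
     + 2 * (\<Sum>b\<in>Basis. inner b e1 * inner b e2) * inner (L e1) (L e2)
     + (\<Sum>b\<in>Basis. (inner b e2)\<^sup>2) * (norm (L e2))\<^sup>2"
    by (simp only: sum_distrib_right sum_distrib_left)
  also have "\<dots> = (norm (L e1))\<^sup>2 + (norm (L e2))\<^sup>2" using s1 s2 s12 by simp
  finally show ?thesis .
qed



definition Lc :: "real \<Rightarrow> real \<Rightarrow> real" where "Lc r s = 3 * (1+r)^2 / (r * s)"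
definition Mc :: "real \<Rightarrow> real \<Rightarrow> real" where "Mc r s = (3 + 2 * Lc r s) / s^2"
definition Kc :: "real \<Rightarrow> real \<Rightarrow> real" where
  "Kc r s = 37 + 80 / s^2 + 3 * (4 * (Lc r s)^2 + 2 * (Mc r s)^2 + 72 * (Lc r s)^4)"

lemma sq_le2: "(x+y)^2 \<le> 2 * x^2 + 2 * y^2" for x y :: real
proof -
  have "2 * x^2 + 2 * y^2 - (x+y)^2 = (x-y)^2" by (simp add: power2_eq_square algebra_simps)
  moreover have "0 \<le> (x-y)^2" by simp
  ultimately show ?thesis by linarith
qed

lemma sq_le2': "(x-y)^2 \<le> 2 * x^2 + 2 * y^2" for x y :: real
  using sq_le2[of x "-y"] by simp

lemma big_case:
  fixes p q g22 s F S a b :: real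
  assumes s0: "s > 0" and hF1: "F \<le> 2 * p^2 + 4 + 2 * g22"
    and hg22: "s^2 * g22 \<le> (p+q)^2" and pa: "p = a + 1" and qb: "q = b + 1"
    and Sb: "a^2 + b^2 \<le> S" and S4: "1 \<le> 4 * S"
  shows "F \<le> (36 + 80 / s^2) * S"
proof -
  have S0: "0 \<le> S" using S4 by linarith
  have p2: "p^2 \<le> 2 + 2 * a^2" using sq_le2[of a 1] pa by simp
  have q2: "q^2 \<le> 2 + 2 * b^2" using sq_le2[of b 1] qb by simp
  have a0: "0 \<le> a^2" and b0: "0 \<le> b^2" by simp_all
  have A: "2 * p^2 + 4 \<le> 36 * S" using p2 Sb S4 b0 by linarith
  have B0: "g22 * s^2 \<le> 36 * S" using hg22 sq_le2[of p q] p2 q2 Sb S4 by (simp add: mult.commute)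
  have s2: "0 < s^2" using s0 by simp
  have B: "g22 \<le> 36 * S / s^2" using B0 s2 by (simp add: pos_le_divide_eq)
  have C: "72 * S / s^2 \<le> 80 * S / s^2" using S0 s2 by (intro divide_right_mono) auto
  have D: "(36 + 80 / s^2) * S = 36 * S + 80 * S / s^2" by (simp add: algebra_simps)
  show ?thesis using hF1 A B C D by linarith
qed

lemma dev: "\<bar>z\<bar> \<le> 1/2 \<Longrightarrow> \<bar>(z+1)^2-1\<bar> \<le> 3 * \<bar>z\<bar>" for z :: real
proof -
  assume h: "\<bar>z\<bar> \<le> 1/2"
  have "(z+1)^2-1 = z*(z+2)" by (simp add: algebra_simps power2_eq_square)
  then have "\<bar>(z+1)^2-1\<bar> = \<bar>z\<bar>*\<bar>z+2\<bar>" by (simp add: abs_mult)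
  moreover have "\<bar>z+2\<bar> \<le> 3" using h by auto
  ultimately show ?thesis by (simp add: mult_left_mono mult.commute)
qed

lemma key_id:
  fixes p q t g12 g22 k s r m :: real
  assumes hm: "m^2 = 1 + 2*r*k + r^2"
    and hq: "q^2 = k^2*p^2 + 2*k* s*g12 + s^2*g22"
    and ht: "m^2*t^2 = (1+r*k)^2*p^2 + 2*(1+r*k)*r* s*g12 + r^2* s^2*g22"
  shows "2*r* s*g12 = m^2*(t^2-1) - r^2*(q^2-1) - (1+2*r*k)*(p^2-1)"
proof -
  have "r^2*q^2 - m^2*t^2 = r^2*(k^2*p^2 + 2*k* s*g12 + s^2*g22)
      - ((1+r*k)^2*p^2 + 2*(1+r*k)*r* s*g12 + r^2* s^2*g22)" using hq ht by simp
  also have "\<dots> = -(1+2*r*k)*p^2 - 2*r* s*g12"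
    by (simp add: algebra_simps power2_eq_square)
  finally have e: "r^2*q^2 - m^2*t^2 = -(1+2*r*k)*p^2 - 2*r* s*g12" .
  have "m^2*(t^2-1) - r^2*(q^2-1) - (1+2*r*k)*(p^2-1)
      = -(r^2*q^2 - m^2*t^2) - (1+2*r*k)*p^2 + (1+2*r*k+r^2 - m^2)"
    by (simp add: algebra_simps)
  also have "\<dots> = 2*r* s*g12" using e hm by linarith
  finally show ?thesis by simp
qed

lemma d22_id:
  fixes p q g12 g22 k s :: real
  assumes ks: "k^2+s^2=1" and hq: "q^2 = k^2*p^2 + 2*k* s*g12 + s^2*g22"
  shows "s^2*(g22-1) = (q^2-1) - k^2*(p^2-1) - 2*k* s*g12"
proof -
  have "(q^2-1) - k^2*(p^2-1) - 2*k* s*g12 = s^2*g22 - 1 + k^2"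
    unfolding hq by (simp add: algebra_simps)
  also have "\<dots> = s^2*(g22-1)" using ks by (simp add: algebra_simps)
  finally show ?thesis by simp
qed

lemma small_case:
  fixes p q t g12 g22 k s r m \<alpha> \<beta> :: real
  assumes ks: "k^2+s^2=1" and s0: "s>0" and r0: "r>0"
    and hm: "m^2 = 1 + 2*r*k + r^2"
    and hq: "q^2 = k^2*p^2 + 2*k* s*g12 + s^2*g22"
    and ht: "m^2*t^2 = (1+r*k)^2*p^2 + 2*(1+r*k)*r* s*g12 + r^2* s^2*g22"
    and ha: "\<bar>p-1\<bar> \<le> 1/2" and hb: "\<bar>q-1\<bar> \<le> 1/2" and hc: "\<bar>t-1\<bar> \<le> 1/2"
    and al: "\<alpha>*p = g12" and ab: "\<alpha>^2+\<beta>^2=g22" and b0: "\<beta>\<ge>0"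
  shows "(p-1)^2+\<alpha>^2+(\<beta>-1)^2 \<le> (1 + 3*(4*(Lc r s)^2+2*(Mc r s)^2+72*(Lc r s)^4))
            * ((p-1)^2+(q-1)^2+(t-1)^2)"
proof -
  define a where "a = p-1"
  define b where "b = q-1"
  define c where "c = t-1"
  define S where "S = a^2+b^2+c^2"
  define L where "L = Lc r s"
  define M where "M = Mc r s"
  define T where "T = \<bar>a\<bar>+\<bar>b\<bar>+\<bar>c\<bar>"
  have L0: "L \<ge> 0" unfolding L_def Lc_def using r0 s0 by simp
  have T0: "T \<ge> 0" and T32: "T \<le> 3/2" using ha hb hc unfolding T_def a_def b_def c_def by auto
  have TS: "T^2 \<le> 3*S"
  proof -
    have "3*S - T^2 = (\<bar>a\<bar>-\<bar>b\<bar>)^2 + (\<bar>b\<bar>-\<bar>c\<bar>)^2 + (\<bar>a\<bar>-\<bar>c\<bar>)^2"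
      unfolding S_def T_def by (simp add: power2_eq_square algebra_simps)
    moreover have "0 \<le> (\<bar>a\<bar>-\<bar>b\<bar>)^2 + (\<bar>b\<bar>-\<bar>c\<bar>)^2 + (\<bar>a\<bar>-\<bar>c\<bar>)^2" by simp
    ultimately show ?thesis by linarith
  qed
  have p12: "p \<ge> 1/2" using ha unfolding abs_le_iff by linarith
  have d11: "\<bar>p^2-1\<bar> \<le> 3*\<bar>a\<bar>" using dev[of a] ha unfolding a_def by simp
  have dv: "\<bar>q^2-1\<bar> \<le> 3*\<bar>b\<bar>" using dev[of b] hb unfolding b_def by simp
  have dw: "\<bar>t^2-1\<bar> \<le> 3*\<bar>c\<bar>" using dev[of c] hc unfolding c_def by simp
  have k2: "k^2 \<le> 1" using ks zero_le_power2[of s] by linarith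
  have s2: "s^2 \<le> 1" using ks zero_le_power2[of k] by linarith
  have k1: "\<bar>k\<bar> \<le> 1" using k2 by (simp add: abs_square_le_1)
  have s1: "s \<le> 1" using s2 s0 by (simp add: power_le_one_iff abs_square_le_1)
  have key: "2*r* s*g12 = m^2*(t^2-1) - r^2*(q^2-1) - (1+2*r*k)*(p^2-1)"
    by (rule key_id[OF hm hq ht])
  have rk: "\<bar>r*k\<bar> \<le> r" using k1 r0 by (simp add: abs_mult mult_left_le)
  have mb: "m^2 \<le> (1+r)^2"
  proof -
    have "(1+r)^2 = 1 + 2*r + r^2" by (simp add: power2_eq_square algebra_simps)
    then show ?thesis using hm rk by (simp add: abs_le_iff)
  qed
  have rkb: "\<bar>1+2*r*k\<bar> \<le> (1+r)^2"
  proof -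
    have "(1+r)^2 = 1 + 2*r + r^2" by (simp add: power2_eq_square algebra_simps)
    moreover have "0 \<le> r^2" by simp
    moreover have "r*k \<le> r" "-(r*k) \<le> r" using rk by (simp_all add: abs_le_iff)
    moreover have "2*r*k = 2*(r*k)" by simp
    ultimately show ?thesis using r0 unfolding abs_le_iff by linarith
  qed
  have rr: "r^2 \<le> (1+r)^2" using r0 by (intro power_mono) auto
  have m2: "0 \<le> m^2" by simp
  have g12b: "\<bar>g12\<bar> \<le> L*T"
  proof -
    have "\<bar>2*r* s*g12\<bar> \<le> \<bar>m^2*(t^2-1)\<bar> + \<bar>r^2*(q^2-1)\<bar> + \<bar>(1+2*r*k)*(p^2-1)\<bar>"
      unfolding key by linarith
    also have "\<dots> = m^2*\<bar>t^2-1\<bar> + r^2*\<bar>q^2-1\<bar> + \<bar>1+2*r*k\<bar>*\<bar>p^2-1\<bar>"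
      by (simp add: abs_mult)
    also have "\<dots> \<le> (1+r)^2*(3*\<bar>c\<bar>) + (1+r)^2*(3*\<bar>b\<bar>) + (1+r)^2*(3*\<bar>a\<bar>)"
      by (intro add_mono mult_mono mb rr rkb dw dv d11) auto
    also have "\<dots> = 3*(1+r)^2*T" unfolding T_def by (simp add: algebra_simps)
    finally have h: "(r* s)*(2*\<bar>g12\<bar>) \<le> 3*(1+r)^2*T" using r0 s0 by (simp add: abs_mult mult.assoc)
    have rs: "r* s > 0" using r0 s0 by simp
    have "(r* s)*\<bar>g12\<bar> \<le> (r* s)*(2*\<bar>g12\<bar>)" using rs by (intro mult_left_mono) auto
    then have "(r* s)*\<bar>g12\<bar> \<le> 3*(1+r)^2*T" using h by linarith
    then have "\<bar>g12\<bar> \<le> 3*(1+r)^2*T/(r* s)" using rs by (simp add: pos_le_divide_eq mult.commute)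
    then show ?thesis unfolding L_def Lc_def by simp
  qed
  have D22: "\<bar>g22-1\<bar> \<le> M*T"
  proof -
    have e: "s^2*(g22-1) = (q^2-1) - k^2*(p^2-1) - 2*k* s*g12" by (rule d22_id[OF ks hq])
    have "\<bar>s^2*(g22-1)\<bar> \<le> \<bar>q^2-1\<bar> + \<bar>k^2*(p^2-1)\<bar> + \<bar>2*k* s*g12\<bar>"
      unfolding e by linarith
    also have "\<dots> = \<bar>q^2-1\<bar> + k^2*\<bar>p^2-1\<bar> + 2*(\<bar>k\<bar>* s*\<bar>g12\<bar>)"
      using s0 by (simp add: abs_mult)
    also have "\<dots> \<le> 3*\<bar>b\<bar> + 1*(3*\<bar>a\<bar>) + 2*(1*1*(L*T))"
      by (intro add_mono mult_mono mult_left_mono dv d11 k2 k1 s1 g12b) (use s0 in auto)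
    also have "\<dots> \<le> (3+2*L)*T" unfolding T_def using L0 by (simp add: algebra_simps)
    finally have "s^2*\<bar>g22-1\<bar> \<le> (3+2*L)*T" by (simp add: abs_mult)
    moreover have "s^2 > 0" using s0 by simp
    ultimately have "\<bar>g22-1\<bar> \<le> (3+2*L)*T/s^2" by (simp add: pos_le_divide_eq mult.commute)
    then show ?thesis unfolding M_def Mc_def L_def by simp
  qed
  have alb: "\<bar>\<alpha>\<bar> \<le> 2*L*T"
  proof -
    have "\<bar>\<alpha>*p\<bar> = \<bar>\<alpha>\<bar>*p" using p12 by (simp add: abs_mult)
    then have "\<bar>\<alpha>\<bar>*p = \<bar>g12\<bar>" using al by simp
    moreover have "\<bar>\<alpha>\<bar>*(1/2) \<le> \<bar>\<alpha>\<bar>*p" using p12 by (intro mult_left_mono) auto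
    ultimately show ?thesis using g12b by linarith
  qed
  have al2: "\<alpha>^2 \<le> 4*L^2*T^2"
  proof -
    have "\<bar>\<alpha>\<bar>^2 \<le> (2*L*T)^2" using alb by (intro power_mono) auto
    then show ?thesis by (simp add: power_mult_distrib)
  qed
  have al4: "(\<alpha>^2)^2 \<le> 36*L^4*T^2"
  proof -
    have "(\<alpha>^2)^2 \<le> (4*L^2*T^2)^2" using al2 by (intro power_mono) auto
    also have "\<dots> = 16*L^4*(T^2*T^2)" by (simp add: power2_eq_square power4_eq_xxxx algebra_simps)
    also have "\<dots> \<le> 16*L^4*(T^2*(9/4))"
    proof -
      have "T^2 \<le> (3/2)^2" using T0 T32 by (intro power_mono) auto
      moreover have "(3/2::real)^2 = 9/4" by (simp add: power2_eq_square)
      ultimately have "T^2 \<le> 9/4" by simp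
      then have "T^2*T^2 \<le> T^2*(9/4)" by (rule mult_left_mono) simp
      then show ?thesis by (rule mult_left_mono) auto
    qed
    also have "\<dots> = 36*L^4*T^2" by simp
    finally show ?thesis .
  qed
  have bb: "(\<beta>-1)^2 \<le> (\<beta>^2-1)^2"
  proof -
    have "(\<beta>^2-1)^2 = (\<beta>-1)^2*(\<beta>+1)^2" by (simp add: power2_eq_square algebra_simps)
    moreover have "1 \<le> (\<beta>+1)^2"
    proof -
      have "1^2 \<le> (\<beta>+1)^2" using b0 by (intro power_mono) auto
      then show ?thesis by simp
    qed
    ultimately show ?thesis using mult_left_mono[of 1 "(\<beta>+1)^2" "(\<beta>-1)^2"] by simp
  qed
  have b2: "(\<beta>^2-1)^2 \<le> 2*M^2*T^2 + 72*L^4*T^2"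
  proof -
    have e: "\<beta>^2-1 = (g22-1) - \<alpha>^2" using ab by simp
    have "\<bar>g22-1\<bar>^2 \<le> (M*T)^2" using D22 by (intro power_mono) auto
    then have g: "(g22-1)^2 \<le> M^2*T^2" by (simp add: power_mult_distrib)
    have "((g22-1) - \<alpha>^2)^2 \<le> 2*(g22-1)^2 + 2*(\<alpha>^2)^2" by (rule sq_le2')
    then show ?thesis unfolding e using al4 g by linarith
  qed
  define P where "P = 4*L^2 + 2*M^2 + 72*L^4"
  have P0: "P \<ge> 0" unfolding P_def by simp
  have "P*T^2 = 4*L^2*T^2 + 2*M^2*T^2 + 72*L^4*T^2" unfolding P_def by (simp add: algebra_simps)
  then have "(p-1)^2+\<alpha>^2+(\<beta>-1)^2 \<le> a^2 + P*T^2"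
    using al2 bb b2 a_def by simp
  also have "\<dots> \<le> S + P*(3*S)"
  proof -
    have "P*T^2 \<le> P*(3*S)" using TS P0 by (intro mult_left_mono)
    moreover have "a^2 \<le> S" unfolding S_def by simp
    ultimately show ?thesis by linarith
  qed
  also have "\<dots> = (1 + 3*P)*S" by (simp add: algebra_simps)
  finally show ?thesis unfolding P_def L_def M_def S_def a_def b_def c_def .
qed


lemma core:
  fixes p q t g12 g22 k s r m F :: real
  assumes ks: "k^2+s^2=1" and s0: "s>0" and r0: "r>0"
    and hm: "m^2 = 1+2*r*k+r^2"
    and hq: "q^2 = k^2*p^2 + 2*k* s*g12 + s^2*g22"
    and ht: "m^2*t^2 = (1+r*k)^2*p^2 + 2*(1+r*k)*r* s*g12 + r^2* s^2*g22"
    and hF1: "F \<le> 2*p^2+4+2*g22"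
    and hg22: "s^2*g22 \<le> (p+q)^2"
    and hF2: "p>0 \<Longrightarrow> \<exists>\<alpha> \<beta>. \<alpha>*p = g12 \<and> \<alpha>^2+\<beta>^2=g22 \<and> \<beta>\<ge>0 \<and> F = (p-1)^2+\<alpha>^2+(\<beta>-1)^2"
  shows "F \<le> Kc r s * ((p-1)^2+(q-1)^2+(t-1)^2)"
proof -
  define S where "S = (p-1)^2+(q-1)^2+(t-1)^2"
  have S0: "0 \<le> S" unfolding S_def by simp
  define P where "P = 4*(Lc r s)^2+2*(Mc r s)^2+72*(Lc r s)^4"
  have P0: "0 \<le> P" unfolding P_def by simp
  have K: "Kc r s = 37 + 80/s^2 + 3*P" unfolding Kc_def P_def by simp
  have s2: "0 \<le> 80/s^2" by simp
  show ?thesis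
  proof (cases "\<bar>p-1\<bar> \<le> 1/2 \<and> \<bar>q-1\<bar> \<le> 1/2 \<and> \<bar>t-1\<bar> \<le> 1/2")
    case True
    then have p0: "p > 0" unfolding abs_le_iff by linarith
    obtain \<alpha> \<beta> where al: "\<alpha>*p = g12" and ab: "\<alpha>^2+\<beta>^2=g22" and b0: "\<beta>\<ge>0"
      and Fe: "F = (p-1)^2+\<alpha>^2+(\<beta>-1)^2" using hF2[OF p0] by blast
    have "F \<le> (1+3*P)*S" unfolding Fe S_def P_def
      using True by (intro small_case[OF ks s0 r0 hm hq ht _ _ _ al ab b0]) auto
    also have "\<dots> \<le> Kc r s * S" unfolding K using S0 s2 by (intro mult_right_mono) auto
    finally show ?thesis unfolding S_def .
  next
    case False
    have sq: "1/4 \<le> z^2" if "1/2 < \<bar>z\<bar>" for z::real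
    proof -
      have "(1/2)^2 \<le> \<bar>z\<bar>^2" using that by (intro power_mono) auto
      then show ?thesis by (simp add: power2_eq_square)
    qed
    have "1/4 \<le> (p-1)^2 \<or> 1/4 \<le> (q-1)^2 \<or> 1/4 \<le> (t-1)^2"
      using False sq by force
    then consider "1/4 \<le> (p-1)^2" | "1/4 \<le> (q-1)^2" | "1/4 \<le> (t-1)^2" by blast
    moreover have "0 \<le> (p-1)^2" "0 \<le> (q-1)^2" "0 \<le> (t-1)^2" by simp_all
    ultimately have S4: "1 \<le> 4*S" unfolding S_def distrib_left by cases linarith+
    have Sb: "(p-1)^2 + (q-1)^2 \<le> S" unfolding S_def by simp
    have "F \<le> (36 + 80/s^2)*S"
      by (rule big_case[OF s0 hF1 hg22 _ _ Sb S4]) auto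
    also have "\<dots> \<le> Kc r s * S" unfolding K using S0 P0 by (intro mult_right_mono) auto
    finally show ?thesis unfolding S_def .
  qed
qed



lemma norm_comb2:
  fixes X Y :: "'a::real_inner"
  shows "(norm (a *\<^sub>R X + b *\<^sub>R Y))^2 = a^2 * (norm X)^2 + 2*a*b*inner X Y + b^2 * (norm Y)^2"
  unfolding power2_norm_eq_inner inner_add_left inner_add_right inner_scaleR_left inner_scaleR_right
  by (simp add: inner_commute[of Y X] power2_eq_square algebra_simps)

lemma main_bound:
  fixes x y :: "'v::euclidean_space" and A :: "'v \<Rightarrow> 'w::euclidean_space"
  assumes dv: "DIM('v) = 2" and dw: "DIM('w) = 2" and ind: "independent {x,y}" and xy: "x \<noteq> y"
    and lA: "linear A"
  shows "(dist_O A)\<^sup>2 \<le> Kc (norm y / norm x) (sin (vangle x y)) *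
          ((norm (A x) / norm x - 1)\<^sup>2 + (norm (A y) / norm y - 1)\<^sup>2
           + (norm (A (x + y)) / norm (x + y) - 1)\<^sup>2)"
proof -
  have x0: "x \<noteq> 0" and y0: "y \<noteq> 0" using ind dependent_zero by auto
  have xspan: "x \<notin> span {y}" using ind xy by (simp add: independent_insert)
  have xy0: "x + y \<noteq> 0"
  proof
    assume "x + y = 0"
    then have "x = (-1) *\<^sub>R y" by (simp add: add_eq_0_iff)
    then have "x \<in> span {y}" by (metis span_base span_scale singletonI)
    then show False using xspan by simp
  qed
  define nx where "nx = norm x"
  define ny where "ny = norm y"
  define r where "r = ny / nx"
  have nx0: "nx > 0" and ny0: "ny > 0" using x0 y0 by (simp_all add: nx_def ny_def)
  have r0: "r > 0" using nx0 ny0 by (simp add: r_def)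
  have rnx: "r * nx = ny" using nx0 by (simp add: r_def)
  define e1 where "e1 = x /\<^sub>R nx"
  define v where "v = y /\<^sub>R ny"
  have ne1: "norm e1 = 1" using nx0 by (simp add: e1_def nx_def)
  have nv: "norm v = 1" using ny0 by (simp add: v_def ny_def)
  have xe: "x = nx *\<^sub>R e1" using nx0 by (simp add: e1_def)
  have yv: "y = ny *\<^sub>R v" using ny0 by (simp add: v_def)
  define k where "k = inner e1 v"
  define w' where "w' = v - k *\<^sub>R e1"
  define s where "s = norm w'"
  have w'0: "w' \<noteq> 0"
  proof
    assume "w' = 0"
    then have vk: "v = k *\<^sub>R e1" by (simp add: w'_def)
    have k0: "k \<noteq> 0" using vk nv by auto
    have "y = (ny * k) *\<^sub>R e1" using yv vk by simp
    then have "e1 = (1 / (ny * k)) *\<^sub>R y" using k0 ny0 by simp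
    then have "x = (nx / (ny * k)) *\<^sub>R y" using xe by simp
    then have "x \<in> span {y}" by (metis span_base span_scale singletonI)
    then show False using xspan by simp
  qed
  have s0: "s > 0" using w'0 by (simp add: s_def)
  have ee: "inner e1 e1 = 1" using ne1 by (simp add: dot_square_norm)
  have vvv: "inner v v = 1" using nv by (simp add: dot_square_norm)
  have ss: "s^2 = 1 - k^2"
  proof -
    have "s^2 = inner w' w'" by (simp add: s_def dot_square_norm)
    also have "\<dots> = inner v v - 2*k*inner e1 v + k^2 * inner e1 e1"
      by (simp add: w'_def inner_diff_left inner_diff_right inner_commute[of v e1] power2_eq_square algebra_simps)
    finally show ?thesis using ee vvv by (simp add: k_def[symmetric] power2_eq_square)
  qed
  have ks: "k^2 + s^2 = 1" using ss by simp
  define e2 where "e2 = w' /\<^sub>R s"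
  have ne2: "norm e2 = 1" using s0 by (simp add: e2_def s_def)
  have o12: "inner e1 e2 = 0"
    using s0 ee by (simp add: e2_def w'_def inner_diff_right k_def)
  have vdec: "v = k *\<^sub>R e1 + s *\<^sub>R e2" using s0 by (simp add: e2_def w'_def)
  have k1: "\<bar>k\<bar> \<le> 1" using ks by (metis abs_square_le_1 le_add_same_cancel1 zero_le_power2)
  have sin_eq: "sin (vangle x y) = s"
  proof -
    have "inner x y / (norm x * norm y) = k"
      unfolding k_def e1_def v_def nx_def ny_def using x0 y0 by (simp add: field_simps)
    then have "vangle x y = arccos k" using x0 y0 by (simp add: vangle_def)
    then have "sin (vangle x y) = sqrt (1 - k^2)" using k1 by (simp add: sin_arccos_abs)
    also have "\<dots> = sqrt (s^2)" using ss by simp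
    also have "\<dots> = s" using s0 by simp
    finally show ?thesis .
  qed
  define p where "p = norm (A e1)"
  define q where "q = norm (A v)"
  define g12 where "g12 = inner (A e1) (A e2)"
  define g22 where "g22 = (norm (A e2))^2"
  have Ae1: "A e1 = A x /\<^sub>R nx" using lA nx0 by (simp add: e1_def linear_scale)
  have Av: "A v = A y /\<^sub>R ny" using lA ny0 by (simp add: v_def linear_scale)
  have pe: "p = norm (A x) / norm x" using nx0 by (simp add: p_def Ae1 nx_def divide_inverse mult.commute)
  have qe: "q = norm (A y) / norm y" using ny0 by (simp add: q_def Av ny_def divide_inverse mult.commute)
  have Avd: "A v = k *\<^sub>R A e1 + s *\<^sub>R A e2" using lA vdec by (simp add: linear_add linear_scale)
  have hq: "q^2 = k^2 * p^2 + 2 * k * s * g12 + s^2 * g22"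
    unfolding q_def Avd norm_comb2 p_def g12_def g22_def by simp
  define z where "z = (1 + r * k) *\<^sub>R e1 + (r * s) *\<^sub>R e2"
  have xyz: "x + y = nx *\<^sub>R z"
  proof -
    have "nx *\<^sub>R z = nx *\<^sub>R e1 + (r * nx) *\<^sub>R (k *\<^sub>R e1 + s *\<^sub>R e2)"
      by (simp add: z_def algebra_simps)
    also have "\<dots> = x + y" using xe yv vdec rnx by simp
    finally show ?thesis by simp
  qed
  define m where "m = norm z"
  have hm: "m^2 = 1 + 2 * r * k + r^2"
  proof -
    have "m^2 = (1 + r * k)^2 + (r * s)^2"
      unfolding m_def z_def norm_comb2 ne1 ne2 o12 by simp
    also have "\<dots> = 1 + 2 * r * k + r^2 * (k^2 + s^2)" by (simp add: power2_eq_square algebra_simps)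
    finally show ?thesis using ks by simp
  qed
  have m0: "m > 0" using xy0 xyz by (auto simp: m_def)
  define t where "t = norm (A (x + y)) / norm (x + y)"
  have Axy: "A (x + y) = nx *\<^sub>R A z" using lA xyz by (simp add: linear_scale)
  have nxy: "norm (x + y) = nx * m" using nx0 by (simp add: xyz m_def)
  have "t = (nx * norm (A z)) / (nx * m)" unfolding t_def nxy Axy using nx0 by simp
  then have mt: "m * t = norm (A z)" using nx0 m0 by simp
  have Az: "A z = (1 + r * k) *\<^sub>R A e1 + (r * s) *\<^sub>R A e2"
    using lA by (simp add: z_def linear_add linear_scale)
  have ht: "m^2 * t^2 = (1 + r * k)^2 * p^2 + 2 * (1 + r * k) * r * s * g12 + r^2 * s^2 * g22"
  proof -
    have "m^2 * t^2 = (norm (A z))^2" using mt by (simp add: power_mult_distrib[symmetric])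
    also have "\<dots> = (1 + r * k)^2 * p^2 + 2 * (1 + r * k) * (r * s) * g12 + (r * s)^2 * g22"
      unfolding Az norm_comb2 p_def g12_def g22_def by simp
    finally show ?thesis by (simp add: power_mult_distrib mult.assoc)
  qed
  obtain g0 :: 'w where g0: "norm g0 = 1" using perp_exists[OF dw, of 0] by auto
  define f1 where "f1 = (if p > 0 then A e1 /\<^sub>R p else g0)"
  have nf1: "norm f1 = 1" using g0 by (simp add: f1_def p_def)
  obtain g :: 'w where g: "norm g = 1" "inner f1 g = 0" using perp_exists[OF dw, of f1] by auto
  define f2 where "f2 = (if inner (A e2) g \<ge> 0 then g else - g)"
  have nf2: "norm f2 = 1" using g by (simp add: f2_def)
  have o'12: "inner f1 f2 = 0" using g by (simp add: f2_def)
  have bpos: "inner (A e2) f2 \<ge> 0" by (simp add: f2_def)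
  define Q where "Q = (\<lambda>z. inner z e1 *\<^sub>R f1 + inner z e2 *\<^sub>R f2)"
  have lQ: "linear Q"
    by (rule linearI) (simp_all add: Q_def inner_add_left algebra_simps)
  have isoQ: "norm (Q w) = norm w" for w
  proof -
    have "(norm (Q w))^2 = (inner w e1)^2 + (inner w e2)^2"
      unfolding Q_def norm_comb2 nf1 nf2 o'12 by simp
    also have "\<dots> = (norm (inner w e1 *\<^sub>R e1 + inner w e2 *\<^sub>R e2))^2"
      unfolding norm_comb2 ne1 ne2 o12 by simp
    also have "\<dots> = (norm w)^2" using decomp2[OF dv ne1 ne2 o12, of w] by simp
    finally show ?thesis by (simp add: power2_eq_iff_nonneg)
  qed
  have Qin: "Q \<in> lin_isometries" using lQ isoQ by (simp add: lin_isometries_def)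
  have Qe1: "Q e1 = f1" using ee o12 by (simp add: Q_def)
  have Qe2: "Q e2 = f2"
  proof -
    have "inner e2 e2 = 1" using ne2 by (simp add: dot_square_norm)
    then show ?thesis using o12 by (simp add: Q_def inner_commute[of e2 e1])
  qed
  define F where "F = (frob_norm (\<lambda>w. A w - Q w))^2"
  have lAQ: "linear (\<lambda>w. A w - Q w)" using lA lQ by (rule linear_compose_sub)
  have Fe: "F = (norm (A e1 - f1))^2 + (norm (A e2 - f2))^2"
    unfolding F_def frob_sq[OF dv ne1 ne2 o12 lAQ] Qe1 Qe2 ..
  have dist_le: "(dist_O A)^2 \<le> F"
  proof -
    let ?X = "(\<lambda>Q. frob_norm (\<lambda>v. A v - Q v)) ` lin_isometries"
    have fn0: "\<And>L. frob_norm L \<ge> 0" for L :: "'v \<Rightarrow> 'w" by (simp add: frob_norm_def sum_nonneg)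
    have bdd: "bdd_below ?X" by (rule bdd_belowI[of _ 0]) (auto simp: fn0)
    have mem: "frob_norm (\<lambda>w. A w - Q w) \<in> ?X" using Qin by auto
    have le: "dist_O A \<le> frob_norm (\<lambda>w. A w - Q w)"
      unfolding dist_O_def by (rule cInf_lower[OF mem bdd])
    have ge: "0 \<le> dist_O A"
      unfolding dist_O_def using mem by (intro cInf_greatest) (auto simp: fn0)
    show ?thesis unfolding F_def using le ge by (intro power_mono) auto
  qed
  have sq2: "(norm (a - b))^2 \<le> 2 * (norm a)^2 + 2 * (norm b)^2" for a b :: 'w
  proof -
    have "norm (a - b) \<le> norm a + norm b" by (rule norm_triangle_ineq4)
    then have "(norm (a - b))^2 \<le> (norm a + norm b)^2" by (intro power_mono) auto
    then show ?thesis using sq_le2[of "norm a" "norm b"] by linarith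
  qed
  have hF1: "F \<le> 2 * p^2 + 4 + 2 * g22"
    using sq2[of "A e1" f1] sq2[of "A e2" f2] nf1 nf2 unfolding Fe p_def g22_def by simp
  have hg22: "s^2 * g22 \<le> (p + q)^2"
  proof -
    have "s *\<^sub>R A e2 = A v - k *\<^sub>R A e1" using Avd by simp
    moreover have "norm (s *\<^sub>R A e2) = s * norm (A e2)" using s0 by simp
    ultimately have "s * norm (A e2) = norm (A v - k *\<^sub>R A e1)" by simp
    also have "\<dots> \<le> norm (A v) + \<bar>k\<bar> * norm (A e1)" by (metis norm_triangle_ineq4 norm_scaleR)
    also have "\<dots> \<le> q + p" using k1 by (simp add: q_def p_def mult_left_le_one_le)
    finally have "s * norm (A e2) \<le> p + q" by simp
    then have "(s * norm (A e2))^2 \<le> (p + q)^2" using s0 by (intro power_mono) auto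
    then show ?thesis by (simp add: g22_def power_mult_distrib)
  qed
  have hF2: "\<exists>\<alpha> \<beta>. \<alpha> * p = g12 \<and> \<alpha>^2 + \<beta>^2 = g22 \<and> \<beta> \<ge> 0 \<and> F = (p-1)^2 + \<alpha>^2 + (\<beta>-1)^2"
    if pp: "p > 0"
  proof -
    define \<alpha> where "\<alpha> = inner (A e2) f1"
    define \<beta> where "\<beta> = inner (A e2) f2"
    have f1e: "f1 = A e1 /\<^sub>R p" using pp by (simp add: f1_def)
    have Ae1f: "A e1 = p *\<^sub>R f1" using pp by (simp add: f1e)
    have "\<alpha> * p = g12" using pp by (simp add: \<alpha>_def f1e g12_def inner_commute)
    moreover have dec: "A e2 = \<alpha> *\<^sub>R f1 + \<beta> *\<^sub>R f2"
      unfolding \<alpha>_def \<beta>_def by (rule decomp2[OF dw nf1 nf2 o'12])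
    have "\<alpha>^2 + \<beta>^2 = g22"
      unfolding g22_def by (subst dec) (simp add: norm_comb2 nf1 nf2 o'12)
    moreover have "\<beta> \<ge> 0" using bpos by (simp add: \<beta>_def)
    moreover have "F = (p-1)^2 + \<alpha>^2 + (\<beta>-1)^2"
    proof -
      have "A e1 - f1 = (p - 1) *\<^sub>R f1" using Ae1f by (simp add: algebra_simps)
      then have "(norm (A e1 - f1))^2 = (p-1)^2" using nf1 by (simp add: power_mult_distrib)
      moreover have "A e2 - f2 = \<alpha> *\<^sub>R f1 + (\<beta> - 1) *\<^sub>R f2" using dec by (simp add: algebra_simps)
      then have "(norm (A e2 - f2))^2 = \<alpha>^2 + (\<beta>-1)^2" by (simp add: norm_comb2 nf1 nf2 o'12)
      ultimately show ?thesis unfolding Fe by simp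
    qed
    ultimately show ?thesis by blast
  qed
  have "F \<le> Kc r s * ((p-1)^2 + (q-1)^2 + (t-1)^2)"
    by (rule core[OF ks s0 r0 hm hq ht hF1 hg22 hF2])
  then show ?thesis using dist_le unfolding sin_eq pe qe t_def r_def nx_def ny_def by simp
qed


lemma sin_nz_open: "0 < x \<Longrightarrow> x < pi \<Longrightarrow> sin x \<noteq> 0"
  using sin_gt_zero[of x] by simp

theorem lemmaA4:
  assumes "DIM('v::euclidean_space) = 2" and "DIM('w::euclidean_space) = 2"
  shows "\<exists>C :: real \<times> real \<Rightarrow> real.
    continuous_on ({0<..<pi} \<times> {0<..}) C \<and>
    (\<forall>p \<in> {0<..<pi} \<times> {0<..}. C p > 0) \<and>
    (\<forall>(x::'v) (y::'v). independent {x, y} \<and> x \<noteq> y \<longrightarrow>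
      (\<forall>A :: 'v \<Rightarrow> 'w. linear A \<longrightarrow>
        (dist_O A)\<^sup>2 \<le> C (vangle x y, norm y / norm x) *
          ((norm (A x) / norm x - 1)\<^sup>2 + (norm (A y) / norm y - 1)\<^sup>2
           + (norm (A (x + y)) / norm (x + y) - 1)\<^sup>2)))"
proof (intro exI[of _ "\<lambda>pr. Kc (snd pr) (sin (fst pr))"] conjI ballI allI impI)
  have nz: "sin (fst pr) \<noteq> 0" "snd pr \<noteq> 0" if "pr \<in> {0<..<pi} \<times> {0<..}" for pr :: "real \<times> real"
    using that sin_gt_zero[of "fst pr"] by auto
  show "continuous_on ({0<..<pi} \<times> {0<..}) (\<lambda>pr. Kc (snd pr) (sin (fst pr)))"
    unfolding Kc_def Mc_def Lc_def
    by (intro continuous_intros) (auto simp: sin_nz_open)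
next
  fix pr :: "real \<times> real"
  have "0 \<le> 80 / (sin (fst pr))^2" by simp
  moreover have "0 \<le> 3 * (4 * (Lc (snd pr) (sin (fst pr)))^2 + 2 * (Mc (snd pr) (sin (fst pr)))^2
      + 72 * (Lc (snd pr) (sin (fst pr)))^4)" by simp
  ultimately show "0 < Kc (snd pr) (sin (fst pr))" unfolding Kc_def by linarith
next
  fix x y :: 'v and A :: "'v \<Rightarrow> 'w"
  assume "independent {x, y} \<and> x \<noteq> y" and "linear A"
  then show "(dist_O A)\<^sup>2 \<le> Kc (snd (vangle x y, norm y / norm x)) (sin (fst (vangle x y, norm y / norm x))) *
          ((norm (A x) / norm x - 1)\<^sup>2 + (norm (A y) / norm y - 1)\<^sup>2
           + (norm (A (x + y)) / norm (x + y) - 1)\<^sup>2)"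
    using main_bound[OF assms] by simp
qed

end
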